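(* Let $\alpha\in\mathbb{R}$, let $\tau,\pi$ be nonzero polynomials, and set $\hat\tau(z)=(1-z^2)^{-\alpha-1/2}\tau(z)$. Suppose $T^{(\alpha+1)}_\pi\hat\tau=\hat\lambda\hat\tau$ for a constant $\hat\lambda$, and set $\lambda=\hat\lambda-2\alpha-1$. Then $T^{(\alpha)}_\tau\pi=\lambda\pi$ and $$B^{(\alpha)}_{\pi\tau}A_{\tau\pi}=T^{(\alpha)}_\tau-\lambda,\qquad A_{\tau\pi}B^{(\alpha)}_{\pi\tau}=T^{(\alpha+1)}_\pi-\hat\lambda.$$
   Context: For a nonzero function $\tau$ and $\alpha\in\mathbb{R}$, $T^{(\alpha)}_\tau=(1-z^2)\left(D_z^2-2\frac{\tau_z}{\tau}D_z+\frac{\tau_{zz}}{\tau}\right)-(2\alpha+1)zD_z+(2\alpha-1)z\frac{\tau_z}{\tau}$. For functions $\tau,\pi$ define $A_{\tau\pi}=\tau^{-1}(\pi D_z-\pi')$ and $B^{(\alpha)}_{\pi\tau}=(1-z^2)A_{\pi\tau}-(2\alpha+1)z\,\tau\,\pi^{-1}$, where $A_{\pi\tau}=\pi^{-1}(\tau D_z-\tau')$. *)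

theory Defs
  imports "HOL-Analysis.Analysis" "HOL-Computational_Algebra.Polynomial"
begin

definition Top :: "real \<Rightarrow> (real \<Rightarrow> real) \<Rightarrow> (real \<Rightarrow> real) \<Rightarrow> real \<Rightarrow> real" where
  "Top \<alpha> \<tau> y z =
     (1 - z\<^sup>2) * (deriv (deriv y) z - 2 * (deriv \<tau> z / \<tau> z) * deriv y z
                   + (deriv (deriv \<tau>) z / \<tau> z) * y z)
     - (2 * \<alpha> + 1) * z * deriv y z + (2 * \<alpha> - 1) * z * (deriv \<tau> z / \<tau> z) * y z"

definition Aop :: "(real \<Rightarrow> real) \<Rightarrow> (real \<Rightarrow> real) \<Rightarrow> (real \<Rightarrow> real) \<Rightarrow> real \<Rightarrow> real" where
  "Aop \<tau> \<pi> y z = (\<pi> z * deriv y z - deriv \<pi> z * y z) / \<tau> z"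

definition Bop :: "real \<Rightarrow> (real \<Rightarrow> real) \<Rightarrow> (real \<Rightarrow> real) \<Rightarrow> (real \<Rightarrow> real) \<Rightarrow> real \<Rightarrow> real" where
  "Bop \<alpha> \<pi> \<tau> y z = (1 - z\<^sup>2) * Aop \<pi> \<tau> y z - (2 * \<alpha> + 1) * z * (\<tau> z / \<pi> z) * y z"

end

theory Submission
  imports Defs
begin

lemma deriv_poly_eq: "deriv (poly p) = poly (pderiv (p::real poly))"
  by (rule ext, rule DERIV_imp_deriv, rule poly_DERIV)

lemma alg:
  fixes s x k W T Ta Tb P Pa Pb al lamh :: real
  assumes s: "s \<noteq> 0" and P: "P \<noteq> 0" and hs: "x^2 = 1 - s" and k: "k = 2*al+1"
  shows "s * ((W * (k*x/s)) * (Ta + (k*x/s) * T) + W * (Tb + (k*(2-s)/s^2) * T + (k*x/s) * Ta)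
           - 2 * (Pa / P) * (W * (Ta + (k*x/s) * T)) + (Pb / P) * (W * T))
         - (2 * (al + 1) + 1) * x * (W * (Ta + (k*x/s) * T)) + (2 * (al + 1) - 1) * x * (Pa / P) * (W * T)
         - lamh * (W * T)
       = W * (s * (T * Pb - 2 * Ta * Pa + Tb * P) - k * x * T * Pa + (2*al-1) * x * Ta * P
              - (lamh - 2*al - 1) * T * P) / P"
  using s P k hs apply (simp add: field_simps)
  apply algebra
  done


lemma part1:
  fixes \<alpha> lamh :: real and \<tau> \<pi> :: "real poly"
  assumes "\<pi> \<noteq> 0"
    and hyp: "\<forall>z. -1 < z \<and> z < 1 \<and> poly \<pi> z \<noteq> 0 \<longrightarrow>
       Top (\<alpha> + 1) (poly \<pi>) (\<lambda>x. (1 - x\<^sup>2) powr (- \<alpha> - 1/2) * poly \<tau> x) z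
         = lamh * ((1 - z\<^sup>2) powr (- \<alpha> - 1/2) * poly \<tau> z)"
  shows "(1 - z\<^sup>2) * (poly \<tau> z * poly (pderiv (pderiv \<pi>)) z - 2 * poly (pderiv \<tau>) z * poly (pderiv \<pi>) z
            + poly (pderiv (pderiv \<tau>)) z * poly \<pi> z)
         - (2*\<alpha>+1) * z * poly \<tau> z * poly (pderiv \<pi>) z + (2*\<alpha>-1) * z * poly (pderiv \<tau>) z * poly \<pi> z
         = (lamh - 2*\<alpha> - 1) * poly \<tau> z * poly \<pi> z"
proof -
  define t where "t = poly \<tau>"
  define t1 where "t1 = poly (pderiv \<tau>)"
  define t2 where "t2 = poly (pderiv (pderiv \<tau>))"
  define p where "p = poly \<pi>"
  define p1 where "p1 = poly (pderiv \<pi>)"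
  define p2 where "p2 = poly (pderiv (pderiv \<pi>))"
  define a where "a = - \<alpha> - 1/2"
  define w where "w = (\<lambda>x::real. (1 - x\<^sup>2) powr a)"
  define c where "c = (\<lambda>x::real. (2*\<alpha>+1) * x / (1 - x\<^sup>2))"
  define c1 where "c1 = (\<lambda>x::real. (2*\<alpha>+1) * (1 + x\<^sup>2) / (1 - x\<^sup>2)\<^sup>2)"
  define f where "f = (\<lambda>x. w x * t x)"
  define g where "g = (\<lambda>x. w x * (t1 x + c x * t x))"
  have dt: "\<And>x. (t has_real_derivative t1 x) (at x)" unfolding t_def t1_def by (rule poly_DERIV)
  have dt1: "\<And>x. (t1 has_real_derivative t2 x) (at x)" unfolding t1_def t2_def by (rule poly_DERIV)
  have dw: "(w has_real_derivative w x * c x) (at x)" if x: "-1 < x" "x < 1" for x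
  proof -
    have pos: "1 - x\<^sup>2 > 0" using x by (simp add: abs_square_less_1 abs_less_iff)
    have "(w has_real_derivative a * (1 - x\<^sup>2) powr (a - 1) * (- (2 * x))) (at x)"
      unfolding w_def using pos
      by (auto intro!: derivative_eq_intros)
    moreover have e: "(1 - x\<^sup>2) powr (a - 1) = w x / (1 - x\<^sup>2)"
      using pos unfolding w_def by (simp add: powr_diff)
    moreover have "a * (w x / (1 - x\<^sup>2)) * (- (2 * x)) = w x * c x"
      using pos unfolding c_def a_def by (simp add: field_simps)
    ultimately show ?thesis by simp
  qed
  have dc: "(c has_real_derivative c1 x) (at x)" if x: "-1 < x" "x < 1" for x
  proof -
    have pos: "1 - x\<^sup>2 > 0" using x by (simp add: abs_square_less_1 abs_less_iff)
    show ?thesis unfolding c_def c1_def using pos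
      by (auto intro!: derivative_eq_intros simp: field_simps power2_eq_square)
  qed
  have df: "(f has_real_derivative g x) (at x)" if x: "-1 < x" "x < 1" for x
    unfolding f_def g_def
    by (rule derivative_eq_intros dw[OF x] dt refl)+ (simp add: algebra_simps)
  have dg: "(g has_real_derivative (w x * c x) * (t1 x + c x * t x) + w x * (t2 x + c1 x * t x + c x * t1 x)) (at x)"
    if x: "-1 < x" "x < 1" for x
    unfolding g_def
    by (rule derivative_eq_intros dw[OF x] dt dt1 dc[OF x] refl)+ (simp add: algebra_simps)
  have E: "(1 - x\<^sup>2) * (t x * p2 x - 2 * t1 x * p1 x + t2 x * p x)
         - (2*\<alpha>+1) * x * t x * p1 x + (2*\<alpha>-1) * x * t1 x * p x
         = (lamh - 2*\<alpha> - 1) * t x * p x"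
    if x: "-1 < x" "x < 1" and px: "p x \<noteq> 0" for x
  proof -
    have pos: "1 - x\<^sup>2 > 0" using x by (simp add: abs_square_less_1 abs_less_iff)
    have wpos: "w x > 0" unfolding w_def using pos by simp
    have nz: "1 - x * x \<noteq> 0" using pos by (simp add: power2_eq_square)
    have ev: "eventually (\<lambda>u. deriv f u = g u) (nhds x)"
    proof -
      have "eventually (\<lambda>u. u \<in> {-1<..<1}) (nhds x)"
        using x by (intro eventually_nhds_in_open) auto
      then show ?thesis by eventually_elim (auto intro: DERIV_imp_deriv df)
    qed
    have d2: "deriv (deriv f) x = (w x * c x) * (t1 x + c x * t x) + w x * (t2 x + c1 x * t x + c x * t1 x)"
      using deriv_cong_ev[OF ev refl] DERIV_imp_deriv[OF dg[OF x]] by simp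
    have d1: "deriv f x = g x" using DERIV_imp_deriv[OF df[OF x]] .
    have h: "Top (\<alpha> + 1) p f x = lamh * f x"
      using hyp x px unfolding p_def f_def w_def t_def a_def by auto
    have dp: "deriv p = p1" "deriv p1 = p2" unfolding p_def p1_def p2_def by (simp_all add: deriv_poly_eq)
    have "Top (\<alpha> + 1) p f x - lamh * f x = w x * ((1 - x\<^sup>2) * (t x * p2 x - 2 * t1 x * p1 x + t2 x * p x)
         - (2*\<alpha>+1) * x * t x * p1 x + (2*\<alpha>-1) * x * t1 x * p x
         - (lamh - 2*\<alpha> - 1) * t x * p x) / p x"
      unfolding Top_def d2 d1 dp unfolding g_def f_def c_def
      using alg[where s="1 - x\<^sup>2" and x=x and k="2*\<alpha>+1" and al=\<alpha> and W="w x" and T="t x"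
         and Ta="t1 x" and Tb="t2 x" and P="p x" and Pa="p1 x" and Pb="p2 x" and lamh=lamh] pos px
      by (simp add: c1_def)
    with h wpos px show ?thesis by simp
  qed
  define Q where "Q = [:1,0,-1:] * (\<tau> * pderiv (pderiv \<pi>) - smult 2 (pderiv \<tau> * pderiv \<pi>) + pderiv (pderiv \<tau>) * \<pi>)
     - smult (2*\<alpha>+1) ([:0,1:] * \<tau> * pderiv \<pi>) + smult (2*\<alpha>-1) ([:0,1:] * pderiv \<tau> * \<pi>)
     - smult (lamh-2*\<alpha>-1) (\<tau>*\<pi>)"
  have pQ: "poly Q x = (1 - x\<^sup>2) * (t x * p2 x - 2 * t1 x * p1 x + t2 x * p x)
         - (2*\<alpha>+1) * x * t x * p1 x + (2*\<alpha>-1) * x * t1 x * p x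
         - (lamh - 2*\<alpha> - 1) * t x * p x" for x
    unfolding Q_def t_def t1_def t2_def p_def p1_def p2_def
    by (simp add: algebra_simps power2_eq_square)
  have "{-1<..<1} - {x. poly \<pi> x = 0} \<subseteq> {x. poly Q x = 0}"
    using E by (auto simp: pQ p_def)
  moreover have "infinite ({-1<..<1::real} - {x. poly \<pi> x = 0})"
    using poly_roots_finite[OF assms(1)] by (intro Diff_infinite_finite) auto
  ultimately have "infinite {x. poly Q x = 0}" using finite_subset by blast
  hence "Q = 0" using poly_roots_finite by blast
  hence "poly Q z = 0" by simp
  thus ?thesis unfolding pQ t_def t1_def t2_def p_def p1_def p2_def by simp
qed

lemma alg2:
  fixes z k al L t ta tb p pa pb y0 y1 y2 :: real
  assumes t: "t \<noteq> 0" and p: "p \<noteq> 0" and k: "k = 2*al+1"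
    and E: "(1 - z^2) * (t * pb - 2 * ta * pa + tb * p) - k * z * t * pa + (2*al-1) * z * ta * p = L * t * p"
  shows "(1 - z^2) * ((t * (((pa*y1 + p*y2 - (pb*y0 + pa*y1))*t - (p*y1 - pa*y0)*ta)/t^2) - ta * ((p*y1 - pa*y0)/t)) / p)
          - k * z * (t / p) * ((p*y1 - pa*y0)/t)
       = (1 - z^2) * (y2 - 2 * (ta / t) * y1 + (tb / t) * y0) - k * z * y1 + (2*al - 1) * z * (ta / t) * y0 - L * y0"
proof -
  have L: "L = ((1 - z^2) * (t * pb - 2 * ta * pa + tb * p) - k * z * t * pa + (2*al-1) * z * ta * p) / (t * p)"
    using E t p by (simp add: field_simps)
  show ?thesis unfolding L using t p k by (simp add: field_simps) (simp add: algebra_simps power2_eq_square)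
qed

lemma alg3:
  fixes z k al L t ta tb p pa pb y0 y1 y2 :: real
  assumes t: "t \<noteq> 0" and p: "p \<noteq> 0" and k: "k = 2*al+1"
    and E: "(1 - z^2) * (t * pb - 2 * ta * pa + tb * p) - k * z * t * pa + (2*al-1) * z * ta * p = L * t * p"
  shows "(p * (((-2*z*(t*y1 - ta*y0) + (1-z^2)*(t*y2 - tb*y0) - k*(t*y0 + z*ta*y0 + z*t*y1)) * p
                 - ((1-z^2)*(t*y1 - ta*y0) - k*z*t*y0) * pa) / p^2)
          - pa * (((1-z^2)*(t*y1 - ta*y0) - k*z*t*y0) / p)) / t
       = (1 - z^2) * (y2 - 2 * (pa / p) * y1 + (pb / p) * y0) - (2*(al+1) + 1) * z * y1
          + (2*(al+1) - 1) * z * (pa / p) * y0 - (L + 2*al + 1) * y0"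
proof -
  have L: "L = ((1 - z^2) * (t * pb - 2 * ta * pa + tb * p) - k * z * t * pa + (2*al-1) * z * ta * p) / (t * p)"
    using E t p by (simp add: field_simps)
  show ?thesis unfolding L using t p k by (simp add: field_simps) (simp add: algebra_simps power2_eq_square)
qed

theorem mainTheorem8:
  fixes \<alpha> lamh :: real and \<tau> \<pi> :: "real poly"
  assumes "\<tau> \<noteq> 0" and "\<pi> \<noteq> 0"
    and hyp: "\<forall>z. -1 < z \<and> z < 1 \<and> poly \<pi> z \<noteq> 0 \<longrightarrow>
       Top (\<alpha> + 1) (poly \<pi>) (\<lambda>x. (1 - x\<^sup>2) powr (- \<alpha> - 1/2) * poly \<tau> x) z
         = lamh * ((1 - z\<^sup>2) powr (- \<alpha> - 1/2) * poly \<tau> z)"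
  shows "(\<forall>z. poly \<tau> z \<noteq> 0 \<longrightarrow>
            Top \<alpha> (poly \<tau>) (poly \<pi>) z = (lamh - 2 * \<alpha> - 1) * poly \<pi> z)
       \<and> (\<forall>S y. open S \<and> (\<forall>x\<in>S. y differentiable at x) \<and> (\<forall>x\<in>S. deriv y differentiable at x)
            \<longrightarrow> (\<forall>z\<in>S. poly \<tau> z \<noteq> 0 \<and> poly \<pi> z \<noteq> 0 \<longrightarrow>
                  Bop \<alpha> (poly \<pi>) (poly \<tau>) (Aop (poly \<tau>) (poly \<pi>) y) z
                    = Top \<alpha> (poly \<tau>) y z - (lamh - 2 * \<alpha> - 1) * y z
                \<and> Aop (poly \<tau>) (poly \<pi>) (Bop \<alpha> (poly \<pi>) (poly \<tau>) y) z
                    = Top (\<alpha> + 1) (poly \<pi>) y z - lamh * y z))"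
proof (intro conjI allI impI ballI)
  fix z assume tz: "poly \<tau> z \<noteq> 0"
  have E: "(1 - z\<^sup>2) * (poly \<tau> z * poly (pderiv (pderiv \<pi>)) z - 2 * poly (pderiv \<tau>) z * poly (pderiv \<pi>) z
            + poly (pderiv (pderiv \<tau>)) z * poly \<pi> z)
         - (2*\<alpha>+1) * z * poly \<tau> z * poly (pderiv \<pi>) z + (2*\<alpha>-1) * z * poly (pderiv \<tau>) z * poly \<pi> z
         = (lamh - 2*\<alpha> - 1) * poly \<tau> z * poly \<pi> z"
    by (rule part1[OF assms(2) hyp])
  show "Top \<alpha> (poly \<tau>) (poly \<pi>) z = (lamh - 2 * \<alpha> - 1) * poly \<pi> z"
  proof -
    have "Top \<alpha> (poly \<tau>) (poly \<pi>) z * poly \<tau> z = (1 - z\<^sup>2) * (poly \<tau> z * poly (pderiv (pderiv \<pi>)) z - 2 * poly (pderiv \<tau>) z * poly (pderiv \<pi>) z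
            + poly (pderiv (pderiv \<tau>)) z * poly \<pi> z)
         - (2*\<alpha>+1) * z * poly \<tau> z * poly (pderiv \<pi>) z + (2*\<alpha>-1) * z * poly (pderiv \<tau>) z * poly \<pi> z"
      unfolding Top_def deriv_poly_eq using tz by (simp add: field_simps)
    with E tz show ?thesis by (metis mult.commute mult.left_commute mult_right_cancel)
  qed
next
  fix S y z
  assume H: "open S \<and> (\<forall>x\<in>S. y differentiable at x) \<and> (\<forall>x\<in>S. deriv y differentiable at x)"
    and zS: "z \<in> S" and nz: "poly \<tau> z \<noteq> 0 \<and> poly \<pi> z \<noteq> 0"
  define t where "t = poly \<tau>"
  define ta where "ta = poly (pderiv \<tau>)"
  define tb where "tb = poly (pderiv (pderiv \<tau>))"
  define p where "p = poly \<pi>"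
  define pa where "pa = poly (pderiv \<pi>)"
  define pb where "pb = poly (pderiv (pderiv \<pi>))"
  define k where "k = 2*\<alpha>+1"
  have dd: "deriv t = ta" "deriv ta = tb" "deriv p = pa" "deriv pa = pb"
    unfolding t_def ta_def tb_def p_def pa_def pb_def by (simp_all add: deriv_poly_eq)
  have Dt: "(t has_real_derivative ta x) (at x)" "(ta has_real_derivative tb x) (at x)"
     "(p has_real_derivative pa x) (at x)" "(pa has_real_derivative pb x) (at x)" for x
    unfolding t_def ta_def tb_def p_def pa_def pb_def by (rule poly_DERIV)+
  have t0: "t z \<noteq> 0" and p0: "p z \<noteq> 0" using nz unfolding t_def p_def by auto
  have dy: "(y has_real_derivative deriv y z) (at z)"
    using H zS DERIV_deriv_iff_real_differentiable by blast
  have dy1: "(deriv y has_real_derivative deriv (deriv y) z) (at z)"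
    using H zS DERIV_deriv_iff_real_differentiable by blast
  have E: "(1 - z^2) * (t z * pb z - 2 * ta z * pa z + tb z * p z) - k * z * t z * pa z + (2*\<alpha>-1) * z * ta z * p z
        = (lamh - 2*\<alpha> - 1) * t z * p z"
    using part1[OF assms(2) hyp, of z] unfolding t_def ta_def tb_def p_def pa_def pb_def k_def by simp
  define u where "u = Aop t p y"
  have u: "u = (\<lambda>x. (p x * deriv y x - pa x * y x) / t x)"
    unfolding u_def Aop_def dd ..
  have du: "deriv u z = ((pa z*deriv y z + p z*deriv (deriv y) z - (pb z*y z + pa z*deriv y z))*t z
                          - (p z*deriv y z - pa z*y z)*ta z)/(t z)^2"
  proof -
    note D = DERIV_divide[OF DERIV_diff[OF DERIV_mult[OF Dt(3) dy1] DERIV_mult[OF Dt(4) dy]] Dt(1) t0]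
    note deq = DERIV_imp_deriv[OF D]
    show ?thesis unfolding u deq using t0 by (simp add: field_simps power2_eq_square)
  qed
  define v where "v = (\<lambda>x. ((1-x\<^sup>2)*(t x * deriv y x - ta x * y x) - k*x*t x*y x) / p x)"
  have v: "Bop \<alpha> p t y = v"
    unfolding v_def Bop_def Aop_def dd k_def by (rule ext) (simp add: diff_divide_distrib, simp add: right_diff_distrib diff_divide_distrib)
  have dv: "deriv v z = ((-2*z*(t z*deriv y z - ta z*y z) + (1-z^2)*(t z*deriv (deriv y) z - tb z*y z)
                 - k*(t z*y z + z*ta z*y z + z*t z*deriv y z)) * p z
                 - ((1-z^2)*(t z*deriv y z - ta z*y z) - k*z*t z*y z) * pa z) / (p z)^2"
  proof -
    have d1: "((\<lambda>x. 1 - x\<^sup>2) has_real_derivative -(2*z)) (at z)"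
      by (auto intro!: derivative_eq_intros)
    have d2: "((\<lambda>x. k * x) has_real_derivative k) (at z)"
      by (auto intro!: derivative_eq_intros)
    note DW = DERIV_diff[OF DERIV_mult[OF Dt(1) dy1] DERIV_mult[OF Dt(2) dy]]
    note DN = DERIV_diff[OF DERIV_mult[OF d1 DW] DERIV_mult[OF DERIV_mult[OF d2 Dt(1)] dy]]
    note D = DERIV_divide[OF DN Dt(3) p0]
    note deq = DERIV_imp_deriv[OF D]
    show ?thesis unfolding v_def deq using p0 by (simp add: field_simps power2_eq_square)
  qed
  show "Bop \<alpha> (poly \<pi>) (poly \<tau>) (Aop (poly \<tau>) (poly \<pi>) y) z
                    = Top \<alpha> (poly \<tau>) y z - (lamh - 2 * \<alpha> - 1) * y z"
  proof -
    have uz: "u z = (p z * deriv y z - pa z * y z) / t z" by (simp add: u)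
    show ?thesis
      unfolding t_def[symmetric] p_def[symmetric] u_def[symmetric]
      unfolding Bop_def Aop_def[of p t u] dd du uz Top_def k_def[symmetric]
      by (rule alg2[OF t0 p0 k_def E])
  qed
  show "Aop (poly \<tau>) (poly \<pi>) (Bop \<alpha> (poly \<pi>) (poly \<tau>) y) z
                    = Top (\<alpha> + 1) (poly \<pi>) y z - lamh * y z"
  proof -
    have vz: "v z = ((1-z\<^sup>2)*(t z * deriv y z - ta z * y z) - k*z*t z*y z) / p z" by (simp add: v_def)
    have eqL: "lamh - 2*\<alpha> - 1 + 2*\<alpha> + 1 = lamh" by simp
    show ?thesis
      unfolding t_def[symmetric] p_def[symmetric] v
      unfolding Aop_def[of t p v] Top_def dd dv vz
      using alg3[OF t0 p0 k_def E] unfolding eqL .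
  qed
qed


end
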